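(* Let $r\ge 2$ and let $p=p(n)$ satisfy $p=\omega(n^{-1})$ and $p=o(n^{-1/r})$. Let $U,W\subset[n]$ be sets of vertices of $G(n,p)$ with $|U|=n/(2^r r!\sqrt{e})$. Then with probability $1-\exp(-\Omega(p^{-1}))$ all but at most $p^{-1}$ vertices in $[n]\setminus(U\cup W)$ have at least $r$ neighbours in $U$.
   Context: $G(n,p)$ is the random graph on $[n]$ with each edge independently present with probability $p$; $U,W$ are fixed (not depending on the edges). Asymptotic notation refers to $n\to\infty$. *)

theory Defs
  imports "HOL-Probability.Probability" "HOL-Library.Landau_Symbols"
begin

definition gnp_edges :: "nat \<Rightarrow> nat set set" where
  "gnp_edges n = {{i, j} | i j. i < j \<and> j < n}"

text \<open>The binomial random graph G(n,p), given by its edge indicator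
  (each potential edge independently present with probability p; non-edges are False).\<close>
definition gnp :: "nat \<Rightarrow> real \<Rightarrow> (nat set \<Rightarrow> bool) pmf" where
  "gnp n p = Pi_pmf (gnp_edges n) False (\<lambda>_. bernoulli_pmf p)"

end

theory Submission imports Defs begin

lemma finite_gnp_edges: "finite (gnp_edges n)"
proof -
  have "gnp_edges n \<subseteq> Pow {0..<n}" unfolding gnp_edges_def by auto
  thus ?thesis by (rule finite_subset) simp
qed

lemma fact_pow_exp: "real k ^ k \<le> fact k * exp (real k)"
proof (cases "k = 0")
  case True thus ?thesis by simp
next
  case False
  hence pos: "0 < real k" by simp
  have "pmf (poisson_pmf (real k)) k \<le> 1" by (rule pmf_le_1)
  hence "real k ^ k / fact k * exp (- real k) \<le> 1" using pmf_poisson[OF pos] by simp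
  thus ?thesis by (simp add: exp_minus field_simps)
qed

lemma gnp_prob:
  assumes A: "A \<subseteq> gnp_edges n" and p: "0 \<le> p" "p \<le> 1"
  shows "measure_pmf.prob (gnp n p) {G. \<forall>e\<in>A. G e = b e} = (\<Prod>e\<in>A. if b e then p else 1 - p)"
proof -
  have fin: "finite (gnp_edges n)" by (rule finite_gnp_edges)
  have "{G. \<forall>e\<in>A. G e = b e} = Pi (gnp_edges n) (\<lambda>e. if e \<in> A then {b e} else UNIV)"
    using A by (auto simp: Pi_def)
  hence "measure_pmf.prob (gnp n p) {G. \<forall>e\<in>A. G e = b e} =
     (\<Prod>e\<in>gnp_edges n. measure_pmf.prob (bernoulli_pmf p) (if e \<in> A then {b e} else UNIV))"
    unfolding gnp_def by (simp add: measure_Pi_pmf_Pi[OF fin])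
  also have "\<dots> = (\<Prod>e\<in>gnp_edges n. if e \<in> A then (if b e then p else 1 - p) else 1)"
    by (intro prod.cong) (use p in \<open>auto simp: measure_pmf_single\<close>)
  also have "\<dots> = (\<Prod>e\<in>A. if b e then p else 1 - p)"
    using A fin by (simp add: prod.If_cases Int_absorb1)
  finally show ?thesis .
qed


lemma edge_in: "u \<in> {0..<n} \<Longrightarrow> v \<in> {0..<n} \<Longrightarrow> u \<noteq> v \<Longrightarrow> {u, v} \<in> gnp_edges n"
  unfolding gnp_edges_def
proof (cases "u < v")
  case True
  assume "u \<in> {0..<n}" "v \<in> {0..<n}" "u \<noteq> v"
  thus "{u, v} \<in> {{i, j} |i j. i < j \<and> j < n}" using True by auto
next
  case False
  assume "u \<in> {0..<n}" "v \<in> {0..<n}" "u \<noteq> v"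
  hence "v < u" "u < n" using False by auto
  moreover have "{u, v} = {v, u}" by auto
  ultimately show "{u, v} \<in> {{i, j} |i j. i < j \<and> j < n}" by blast
qed

lemma prob_exact:
  assumes U: "U \<subseteq> {0..<n}" and T: "T \<subseteq> {0..<n}" and disj: "U \<inter> T = {}"
    and N: "\<And>v. v \<in> T \<Longrightarrow> N v \<subseteq> U" and p: "0 \<le> p" "p \<le> 1"
  shows "measure_pmf.prob (gnp n p) {G. \<forall>v\<in>T. \<forall>u\<in>U. G {u, v} = (u \<in> N v)}
     = (\<Prod>v\<in>T. p ^ card (N v) * (1 - p) ^ (card U - card (N v)))"
proof -
  have finU: "finite U" using U finite_subset by blast
  have finT: "finite T" using T finite_subset by blast
  define f where "f = (\<lambda>(u::nat, v::nat). {u, v})"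
  define A where "A = f ` (U \<times> T)"
  define b where "b = (\<lambda>e. \<exists>u\<in>U. \<exists>v\<in>T. e = {u, v} \<and> u \<in> N v)"
  have inj: "inj_on f (U \<times> T)"
    using disj unfolding inj_on_def f_def by (auto simp: doubleton_eq_iff)
  have bf: "b {u, v} = (u \<in> N v)" if "u \<in> U" "v \<in> T" for u v
  proof
    assume "b {u, v}"
    then obtain u' v' where "u' \<in> U" "v' \<in> T" "{u, v} = {u', v'}" "u' \<in> N v'" unfolding b_def by blast
    thus "u \<in> N v" using that disj by (auto simp: doubleton_eq_iff)
  next
    assume "u \<in> N v" thus "b {u, v}" using that unfolding b_def by blast
  qed
  have A_sub: "A \<subseteq> gnp_edges n"
    unfolding A_def f_def using U T disj by (auto intro!: edge_in)
  have ev: "{G. \<forall>v\<in>T. \<forall>u\<in>U. G {u, v} = (u \<in> N v)} = {G. \<forall>e\<in>A. G e = b e}"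
    unfolding A_def f_def using bf by auto
  have "measure_pmf.prob (gnp n p) {G. \<forall>e\<in>A. G e = b e} = (\<Prod>e\<in>A. if b e then p else 1 - p)"
    by (rule gnp_prob[OF A_sub p])
  also have "\<dots> = (\<Prod>x\<in>U \<times> T. if b (f x) then p else 1 - p)"
    unfolding A_def by (rule prod.reindex[OF inj, unfolded comp_def])
  also have "\<dots> = (\<Prod>u\<in>U. \<Prod>v\<in>T. if b {u, v} then p else 1 - p)"
    unfolding f_def by (simp add: prod.cartesian_product split_def)
  also have "\<dots> = (\<Prod>v\<in>T. \<Prod>u\<in>U. if u \<in> N v then p else 1 - p)"
    by (subst prod.swap) (intro prod.cong refl, simp add: bf)
  also have "\<dots> = (\<Prod>v\<in>T. p ^ card (N v) * (1 - p) ^ (card U - card (N v)))"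
  proof (intro prod.cong refl)
    fix v assume v: "v \<in> T"
    have "(\<Prod>u\<in>U. if u \<in> N v then p else 1 - p) = p ^ card (U \<inter> N v) * (1 - p) ^ card (U - N v)"
      using finU by (simp add: prod.If_cases Diff_eq)
    also have "U \<inter> N v = N v" using N[OF v] by blast
    also have "card (U - N v) = card U - card (N v)" using N[OF v] finU by (simp add: card_Diff_subset finite_subset)
    finally show "(\<Prod>u\<in>U. if u \<in> N v then p else 1 - p) = p ^ card (N v) * (1 - p) ^ (card U - card (N v))" .
  qed
  finally show ?thesis using ev by simp
qed


lemma bad_bound:
  assumes U: "U \<subseteq> {0..<n}" and W: "W \<subseteq> {0..<n}" and p: "0 \<le> p" "p \<le> 1"
  shows "measure_pmf.prob (gnp n p) {G. k \<le> card {v \<in> {0..<n} - (U \<union> W). card {u \<in> U. G {u, v}} < r}}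
    \<le> real (card ({0..<n} - (U \<union> W)) choose k) *
       (\<Sum>S\<in>{S. S \<subseteq> U \<and> card S < r}. p ^ card S * (1 - p) ^ (card U - card S)) ^ k"
proof -
  define V where "V = {0..<n} - (U \<union> W)"
  define Sr where "Sr = {S. S \<subseteq> U \<and> card S < r}"
  define f where "f = (\<lambda>S::nat set. p ^ card S * (1 - p) ^ (card U - card S))"
  define TT where "TT = {T. T \<subseteq> V \<and> card T = k}"
  define E where "E = (\<lambda>T N. {G. \<forall>v\<in>T. \<forall>u\<in>U. G {u, v} = (u \<in> N v)})"
  have finU: "finite U" using U finite_subset by blast
  have finV: "finite V" unfolding V_def by simp
  have finSr: "finite Sr" unfolding Sr_def using finU by simp
  have finTT: "finite TT" unfolding TT_def using finV by simp
  have sub: "{G. k \<le> card {v \<in> V. card {u \<in> U. G {u, v}} < r}} \<subseteq> (\<Union>T\<in>TT. \<Union>N\<in>PiE T (\<lambda>_. Sr). E T N)"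
  proof
    fix G assume "G \<in> {G. k \<le> card {v \<in> V. card {u \<in> U. G {u, v}} < r}}"
    hence "k \<le> card {v \<in> V. card {u \<in> U. G {u, v}} < r}" by simp
    then obtain T where T: "T \<subseteq> {v \<in> V. card {u \<in> U. G {u, v}} < r}" "card T = k"
      by (meson obtain_subset_with_card_n)
    define N where "N = restrict (\<lambda>v. {u \<in> U. G {u, v}}) T"
    have "T \<in> TT" using T unfolding TT_def by auto
    moreover have "N \<in> PiE T (\<lambda>_. Sr)" unfolding N_def Sr_def using T by auto
    moreover have "G \<in> E T N" unfolding E_def N_def by auto
    ultimately show "G \<in> (\<Union>T\<in>TT. \<Union>N\<in>PiE T (\<lambda>_. Sr). E T N)" by blast
  qed
  have "measure_pmf.prob (gnp n p) {G. k \<le> card {v \<in> V. card {u \<in> U. G {u, v}} < r}}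
     \<le> measure_pmf.prob (gnp n p) (\<Union>T\<in>TT. \<Union>N\<in>PiE T (\<lambda>_. Sr). E T N)"
    by (rule measure_pmf.finite_measure_mono[OF sub]) simp
  also have "\<dots> \<le> (\<Sum>T\<in>TT. measure_pmf.prob (gnp n p) (\<Union>N\<in>PiE T (\<lambda>_. Sr). E T N))"
    by (rule measure_pmf.finite_measure_subadditive_finite[OF finTT]) simp
  also have "\<dots> \<le> (\<Sum>T\<in>TT. \<Sum>N\<in>PiE T (\<lambda>_. Sr). measure_pmf.prob (gnp n p) (E T N))"
  proof (intro sum_mono)
    fix T assume "T \<in> TT"
    hence "finite T" unfolding TT_def using finV finite_subset by blast
    hence "finite (PiE T (\<lambda>_. Sr))" using finSr by (simp add: finite_PiE)
    thus "measure_pmf.prob (gnp n p) (\<Union>N\<in>PiE T (\<lambda>_. Sr). E T N) \<le> (\<Sum>N\<in>PiE T (\<lambda>_. Sr). measure_pmf.prob (gnp n p) (E T N))"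
      by (rule measure_pmf.finite_measure_subadditive_finite) simp
  qed
  also have "\<dots> = (\<Sum>T\<in>TT. (\<Sum>S\<in>Sr. f S) ^ k)"
  proof (intro sum.cong refl)
    fix T assume T: "T \<in> TT"
    hence TV: "T \<subseteq> V" and cT: "card T = k" unfolding TT_def by auto
    have finT: "finite T" using TV finV finite_subset by blast
    have "(\<Sum>N\<in>PiE T (\<lambda>_. Sr). measure_pmf.prob (gnp n p) (E T N)) = (\<Sum>N\<in>PiE T (\<lambda>_. Sr). \<Prod>v\<in>T. f (N v))"
    proof (intro sum.cong refl)
      fix N assume N: "N \<in> PiE T (\<lambda>_. Sr)"
      show "measure_pmf.prob (gnp n p) (E T N) = (\<Prod>v\<in>T. f (N v))"
        unfolding E_def f_def
        by (rule prob_exact[OF U _ _ _ p]) (use TV N in \<open>auto simp: V_def Sr_def\<close>)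
    qed
    also have "\<dots> = (\<Prod>v\<in>T. \<Sum>S\<in>Sr. f S)"
      by (rule prod_sum_PiE[symmetric]) (use finT finSr in auto)
    also have "\<dots> = (\<Sum>S\<in>Sr. f S) ^ k" using cT by simp
    finally show "(\<Sum>N\<in>PiE T (\<lambda>_. Sr). measure_pmf.prob (gnp n p) (E T N)) = (\<Sum>S\<in>Sr. f S) ^ k" .
  qed
  also have "\<dots> = real (card V choose k) * (\<Sum>S\<in>Sr. f S) ^ k"
    unfolding TT_def using n_subsets[OF finV] by simp
  finally show ?thesis unfolding V_def Sr_def f_def .
qed


lemma q_bound:
  assumes finU: "finite U" and p: "0 \<le> p" "p \<le> 1"
  shows "(\<Sum>S\<in>{S. S \<subseteq> U \<and> card S < r}. p ^ card S * (1 - p) ^ (card U - card S))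
     \<le> real r * exp (real r) * (1 + real (card U) * p) ^ r * exp (- (real (card U) * p))"
proof -
  define m where "m = card U"
  define Sr where "Sr = {S. S \<subseteq> U \<and> card S < r}"
  define x where "x = real m * p"
  have x0: "0 \<le> x" unfolding x_def using p by simp
  have finSr: "finite Sr" unfolding Sr_def using finU by simp
  have trm: "p ^ card S * (1 - p) ^ (m - card S) \<le> p ^ card S * exp (real r - x)" if S: "S \<in> Sr" for S
  proof -
    have le: "card S \<le> m" "card S < r" using S finU card_mono unfolding Sr_def m_def by auto
    have "(1 - p) ^ (m - card S) \<le> exp (- p) ^ (m - card S)"
      by (rule power_mono) (use p in \<open>auto intro: order.trans[OF _ exp_ge_add_one_self]\<close>)
    also have "\<dots> = exp (- p * real (m - card S))" by (simp add: exp_of_nat_mult[symmetric] mult.commute)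
    also have "\<dots> \<le> exp (real r - x)"
    proof -
      have "p * real (card S) \<le> real r" using p le
        by (metis less_imp_le mult_left_le_one_le of_nat_0_le_iff of_nat_le_iff order.trans)
      hence "- p * real (m - card S) \<le> real r - x" using le unfolding x_def by (simp add: of_nat_diff algebra_simps)
      thus ?thesis by simp
    qed
    finally show ?thesis by (rule mult_left_mono) (use p in simp)
  qed
  have "(\<Sum>S\<in>Sr. p ^ card S * (1 - p) ^ (m - card S)) \<le> (\<Sum>S\<in>Sr. p ^ card S * exp (real r - x))"
    by (rule sum_mono) (rule trm)
  also have "\<dots> = exp (real r - x) * (\<Sum>S\<in>Sr. p ^ card S)" by (simp add: sum_distrib_left mult.commute)
  also have "(\<Sum>S\<in>Sr. p ^ card S) = (\<Sum>j<r. \<Sum>S\<in>{S \<in> Sr. card S = j}. p ^ card S)"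
    by (rule sum.group[symmetric]) (use finSr in \<open>auto simp: Sr_def\<close>)
  also have "\<dots> = (\<Sum>j<r. real (m choose j) * p ^ j)"
  proof (intro sum.cong refl)
    fix j assume j: "j \<in> {..<r}"
    have "{S \<in> Sr. card S = j} = {S. S \<subseteq> U \<and> card S = j}" using j unfolding Sr_def by auto
    thus "(\<Sum>S\<in>{S \<in> Sr. card S = j}. p ^ card S) = real (m choose j) * p ^ j"
      using n_subsets[OF finU, of j] unfolding m_def by simp
  qed
  also have "\<dots> \<le> (\<Sum>j<r. (1 + x) ^ r)"
  proof (rule sum_mono)
    fix j assume j: "j \<in> {..<r}"
    have "real (m choose j) * p ^ j \<le> real m ^ j * p ^ j"
    proof (rule mult_right_mono)
      have "m choose j \<le> m ^ j" by (cases "j \<le> m") (auto intro: binomial_le_pow simp: binomial_eq_0)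
      hence "real (m choose j) \<le> real (m ^ j)" by (rule of_nat_mono)
      thus "real (m choose j) \<le> real m ^ j" by simp
    qed (use p in simp)
    also have "\<dots> = x ^ j" unfolding x_def by (simp add: power_mult_distrib)
    also have "\<dots> \<le> (1 + x) ^ j" by (rule power_mono) (use x0 in auto)
    also have "\<dots> \<le> (1 + x) ^ r" by (rule power_increasing) (use j x0 in auto)
    finally show "real (m choose j) * p ^ j \<le> (1 + x) ^ r" .
  qed
  also have "\<dots> = real r * (1 + x) ^ r" by simp
  finally have "(\<Sum>S\<in>Sr. p ^ card S * (1 - p) ^ (m - card S)) \<le> exp (real r - x) * (real r * (1 + x) ^ r)"
    by (simp add: mult_left_mono)
  also have "\<dots> = real r * exp (real r) * (1 + x) ^ r * exp (- x)" by (simp add: exp_diff exp_minus field_simps)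
  finally show ?thesis unfolding Sr_def x_def m_def .
qed


lemma per_n:
  assumes U: "U \<subseteq> {0..<n}" and W: "W \<subseteq> {0..<n}" and p: "0 < p" "p \<le> 1"
    and hyp: "real n * p * (real r * exp (real r) * (1 + real (card U) * p) ^ r * exp (- (real (card U) * p))) \<le> exp (-2)"
  shows "measure_pmf.prob (gnp n p)
             {G. real (card {v \<in> {0..<n} - (U \<union> W). card {u \<in> U. G {u, v}} < r}) \<le> 1 / p}
           \<ge> 1 - exp (- 1 / p)"
proof -
  define V where "V = {0..<n} - (U \<union> W)"
  define q where "q = (\<Sum>S\<in>{S. S \<subseteq> U \<and> card S < r}. p ^ card S * (1 - p) ^ (card U - card S))"
  define Q where "Q = real r * exp (real r) * (1 + real (card U) * p) ^ r * exp (- (real (card U) * p))"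
  define k where "k = nat \<lfloor>1 / p\<rfloor> + 1"
  define B where "B = {G. real (card {v \<in> V. card {u \<in> U. G {u, v}} < r}) \<le> 1 / p}"
  have finU: "finite U" using U finite_subset by blast
  have q0: "0 \<le> q" unfolding q_def using p by (intro sum_nonneg) simp
  have qQ: "q \<le> Q" unfolding q_def Q_def by (rule q_bound[OF finU]) (use p in auto)
  have k1: "1 / p \<le> real k" unfolding k_def by linarith
  have kpos: "k \<ge> 1" unfolding k_def by simp
  have cardV: "card V \<le> n" unfolding V_def by (metis card_Diff_subset_Int card_atLeastLessThan diff_le_self finite_atLeastLessThan card_Diff_subset finite_Int le_trans card_mono Diff_subset)
  have nq: "real n * q \<le> exp (-2) * real k"
  proof -
    have "real n * q \<le> real n * Q" using qQ by (simp add: mult_left_mono)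
    also have "\<dots> \<le> exp (-2) / p" using hyp p unfolding Q_def by (simp add: field_simps)
    also have "\<dots> \<le> exp (-2) * real k" using k1 p by (simp add: divide_simps mult.commute)
    finally show ?thesis .
  qed
  have compl: "UNIV - B \<subseteq> {G. k \<le> card {v \<in> V. card {u \<in> U. G {u, v}} < r}}"
  proof
    fix G assume "G \<in> UNIV - B"
    hence h: "1 / p < real (card {v \<in> V. card {u \<in> U. G {u, v}} < r})" unfolding B_def by auto
    have "\<lfloor>1 / p\<rfloor> < int (card {v \<in> V. card {u \<in> U. G {u, v}} < r})"
      using h by (simp add: floor_less_iff)
    hence "nat \<lfloor>1 / p\<rfloor> < card {v \<in> V. card {u \<in> U. G {u, v}} < r}"
      using p by (simp add: nat_less_iff)
    thus "G \<in> {G. k \<le> card {v \<in> V. card {u \<in> U. G {u, v}} < r}}" unfolding k_def by simp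
  qed
  have "measure_pmf.prob (gnp n p) (UNIV - B) \<le> measure_pmf.prob (gnp n p) {G. k \<le> card {v \<in> V. card {u \<in> U. G {u, v}} < r}}"
    by (rule measure_pmf.finite_measure_mono[OF compl]) simp
  also have "\<dots> \<le> real (card V choose k) * q ^ k"
    unfolding V_def q_def by (rule bad_bound[OF U W]) (use p in auto)
  also have "\<dots> \<le> real n ^ k / fact k * q ^ k"
  proof (rule mult_right_mono)
    have "(card V choose k) * fact k \<le> card V ^ k" by (rule binomial_fact_pow)
    also have "\<dots> \<le> n ^ k" using cardV by (rule power_mono) simp
    finally have "real ((card V choose k) * fact k) \<le> real (n ^ k)" by (rule of_nat_mono)
    thus "real (card V choose k) \<le> real n ^ k / fact k" by (simp add: field_simps)
  qed (use q0 in simp)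
  also have "\<dots> = (real n * q) ^ k / fact k" by (simp add: power_mult_distrib)
  also have "\<dots> \<le> (exp (-2) * real k) ^ k / fact k"
    by (intro divide_right_mono power_mono nq) (use q0 in auto)
  also have "\<dots> = exp (-2) ^ k * (real k ^ k / fact k)" by (simp add: power_mult_distrib)
  also have "\<dots> \<le> exp (-2) ^ k * exp (real k)"
    using fact_pow_exp[of k] by (intro mult_left_mono) (auto simp: divide_simps mult.commute)
  also have "\<dots> = exp (- real k)"
    by (simp add: exp_of_nat_mult[symmetric] exp_add[symmetric])
  also have "\<dots> \<le> exp (- 1 / p)" using k1 by simp
  finally have "measure_pmf.prob (gnp n p) (UNIV - B) \<le> exp (- 1 / p)" .
  moreover have "measure_pmf.prob (gnp n p) (UNIV - B) = 1 - measure_pmf.prob (gnp n p) B"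
    using measure_pmf.prob_compl[of B "gnp n p"] by simp
  ultimately show ?thesis unfolding B_def V_def by simp
qed


theorem lemma6:
  fixes r :: nat and p :: "nat \<Rightarrow> real" and U W :: "nat \<Rightarrow> nat set"
  assumes r: "r \<ge> 2"
    and p_lower: "p \<in> \<omega>(\<lambda>n. 1 / real n)"
    and p_upper: "p \<in> o(\<lambda>n. real n powr (- 1 / real r))"
    and U_sub: "\<And>n. U n \<subseteq> {0..<n}"
    and W_sub: "\<And>n. W n \<subseteq> {0..<n}"
    and U_card: "\<And>n. \<bar>real (card (U n)) - real n / (2 ^ r * fact r * sqrt (exp 1))\<bar> < 1"
  shows "\<exists>c>0. \<forall>\<^sub>F n in at_top.
           measure_pmf.prob (gnp n (p n))
             {G. real (card {v \<in> {0..<n} - (U n \<union> W n). card {u \<in> U n. G {u, v}} < r})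
                   \<le> 1 / p n}
           \<ge> 1 - exp (- c / p n)"
proof (intro exI[of _ 1] conjI)
  define K :: real where "K = 2 ^ r * fact r * sqrt (exp 1)"
  have Kpos: "K > 0" unfolding K_def by simp
  define C :: real where "C = K * real r * exp (real r + 1)"
  have Cpos: "C > 0" unfolding C_def using Kpos r by simp
  define y where "y = (\<lambda>n. 1 + real (card (U n)) * \<bar>p n\<bar>)"
  have nK: "real n < K * (real (card (U n)) + 1)" for n
  proof -
    have "real n / K < real (card (U n)) + 1" using U_card[of n] unfolding K_def by linarith
    thus ?thesis using Kpos by (simp add: field_simps)
  qed
  have ev1: "\<forall>\<^sub>F n in at_top. \<bar>p n\<bar> \<le> 1"
  proof -
    have "\<forall>\<^sub>F n in at_top. norm (p n) \<le> 1 * norm (real n powr (- 1 / real r))"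
      by (rule landau_o.smallD[OF p_upper]) simp
    moreover have "\<forall>\<^sub>F n in at_top. (1::nat) \<le> n" by (rule eventually_ge_at_top)
    ultimately show ?thesis
    proof eventually_elim
      case (elim n)
      have "1 \<le> real n powr (1 / real r)" using elim(2) by (intro ge_one_powr_ge_zero) auto
      hence "real n powr (- 1 / real r) \<le> 1"
        using elim(2) by (simp add: powr_minus_divide divide_simps)
      thus ?case using elim(1) by simp
    qed
  qed
  have ylim: "filterlim y at_top at_top"
    unfolding filterlim_at_top
  proof
    fix Z :: real
    define c where "c = K * (max Z 1 + 1)"
    have cpos: "c > 0" unfolding c_def using Kpos by (simp add: add_pos_nonneg)
    have "\<forall>\<^sub>F n in at_top. norm (p n) \<ge> c * norm (1 / real n)"
      by (rule smallomegaD[OF p_lower])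
    moreover have "\<forall>\<^sub>F n in at_top. (1::nat) \<le> n" by (rule eventually_ge_at_top)
    ultimately show "\<forall>\<^sub>F n in at_top. Z \<le> y n"
      using ev1
    proof eventually_elim
      case (elim n)
      have np: "c \<le> real n * \<bar>p n\<bar>" using elim(1,2) by (simp add: divide_simps mult.commute)
      have "real n / K - 1 < real (card (U n))" using nK[of n] Kpos by (simp add: field_simps)
      hence "(real n / K - 1) * \<bar>p n\<bar> \<le> real (card (U n)) * \<bar>p n\<bar>"
        by (intro mult_right_mono) auto
      moreover have "(real n / K - 1) * \<bar>p n\<bar> = real n * \<bar>p n\<bar> / K - \<bar>p n\<bar>" by (simp add: field_simps)
      moreover have "c / K \<le> real n * \<bar>p n\<bar> / K" using np Kpos by (simp add: divide_right_mono)
      moreover have "c / K = max Z 1 + 1" unfolding c_def using Kpos by simp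
      ultimately show "Z \<le> y n" unfolding y_def using elim(3) by linarith
    qed
  qed
  have "((\<lambda>n. y n ^ (r + 1) / exp (y n)) \<longlongrightarrow> 0) at_top"
    by (rule filterlim_compose[OF tendsto_power_div_exp_0 ylim])
  hence ev2: "\<forall>\<^sub>F n in at_top. y n ^ (r + 1) / exp (y n) < exp (-2) / C"
    by (rule order_tendstoD(2)) (use Cpos in simp)
  show "\<forall>\<^sub>F n in at_top.
           measure_pmf.prob (gnp n (p n))
             {G. real (card {v \<in> {0..<n} - (U n \<union> W n). card {u \<in> U n. G {u, v}} < r})
                   \<le> 1 / p n}
           \<ge> 1 - exp (- 1 / p n)"
    using ev1 ev2
  proof eventually_elim
    case (elim n)
    show ?case
    proof (cases "p n > 0")
      case False
      hence "1 - exp (- 1 / p n) \<le> 0" by (simp add: divide_nonpos_nonpos)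
      thus ?thesis using measure_nonneg order.trans by blast
    next
      case True
      define m where "m = real (card (U n))"
      have m0: "m \<ge> 0" unfolding m_def by simp
      have y_eq: "y n = 1 + m * p n" unfolding y_def m_def using True by simp
      have np: "real n * p n \<le> K * y n"
      proof -
        have "real n * p n \<le> K * (m + 1) * p n" using nK[of n] True unfolding m_def by (simp add: mult_right_mono)
        also have "\<dots> \<le> K * y n" unfolding y_eq using Kpos elim(1) True
          by (simp add: algebra_simps)
        finally show ?thesis .
      qed
      have hyp: "real n * p n * (real r * exp (real r) * (1 + m * p n) ^ r * exp (- (m * p n))) \<le> exp (-2)"
      proof -
        have Q0: "0 \<le> real r * exp (real r) * (1 + m * p n) ^ r * exp (- (m * p n))"
          using True m0 by simp
        have "real n * p n * (real r * exp (real r) * (1 + m * p n) ^ r * exp (- (m * p n)))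
            \<le> K * y n * (real r * exp (real r) * y n ^ r * exp (1 - y n))"
          using mult_right_mono[OF np Q0] unfolding y_eq by simp
        also have "\<dots> = C * (y n ^ (r + 1) / exp (y n))"
          unfolding C_def by (simp add: exp_diff exp_add field_simps)
        also have "\<dots> \<le> exp (-2)" using elim(2) Cpos by (simp add: field_simps)
        finally show ?thesis .
      qed
      show ?thesis
        by (rule per_n[OF U_sub W_sub True]) (use elim(1) hyp in \<open>simp_all add: m_def\<close>)
    qed
  qed
qed simp

end
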